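(* Let $N\ge 3$ and $\boldsymbol\theta\in\mathbb{R}^N$, and let $|0_L\rangle,|1_L\rangle,P,Z_L$ be the dephasing code associated with $\boldsymbol\theta$. Then $|0_L\rangle$ and $|1_L\rangle$ are orthonormal, and for all $\mathbf v,\mathbf u\in\mathbb{R}^N$: $P(\mathbf v\cdot\mathbf Z)P=(\mathbf v\cdot\cos(2\boldsymbol\theta))\,Z_L$ and $P(\mathbf v\cdot\mathbf Z)(\mathbf u\cdot\mathbf Z)P\in\mathbb{R}P$, where $\cos$ is applied entrywise. In particular, if $\cos(2\boldsymbol\theta)\perp\mathrm{col}(C)$, then $PSP\in\mathbb{R}P$ for every $S$ in the Lindblad span $\mathfrak{S}$ of the dephasing model, and $PHP=\tfrac12(\boldsymbol{\mathfrak h}\cdot\cos(2\boldsymbol\theta))Z_L$.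
   Context: Qubits $1,\dots,N$; $Z_j$, $X_j$ denote the Pauli $Z$, $X$ operators on qubit $j$ of $(\mathbb{C}^2)^{\otimes N}$, with $Z|0\rangle=|0\rangle$, $Z|1\rangle=-|1\rangle$. For $\mathbf v\in\mathbb{R}^N$, $\mathbf v\cdot\mathbf Z:=\sum_j v_jZ_j$. Dephasing model: $\boldsymbol{\mathfrak h}\in\mathbb{R}^N$, $H=\tfrac12\boldsymbol{\mathfrak h}\cdot\mathbf Z$; $C$ is a real symmetric positive semidefinite $N\times N$ matrix with orthonormal eigenvectors $\mathbf v_1,\dots,\mathbf v_N$ and eigenvalues $\lambda_1,\dots,\lambda_N\ge0$; $L_j=\sqrt{\lambda_j}\,\mathbf v_j\cdot\mathbf Z$; $\mathrm{col}(C)$ and $\ker(C)$ are the column space and kernel of $C$; the Lindblad span $\mathfrak{S}$ is the real span of $I$, all $L_i$ and all $L_iL_j$. Dephasing code for $\boldsymbol\theta\in\mathbb{R}^N$: $|0_L\rangle=\bigotimes_{j=1}^N(\cos\theta_j|0\rangle+i\sin\theta_j|1\rangle)$, $|1_L\rangle=X^{\otimes N}|0_L\rangle$, $P=|0_L\rangle\langle0_L|+|1_L\rangle\langle1_L|$, $Z_L=|0_L\rangle\langle0_L|-|1_L\rangle\langle1_L|$. *)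

theory Defs
  imports "HOL-Analysis.Analysis" "Jordan_Normal_Form.Matrix"
begin

(* Conventions: qubits are indexed 0..N-1 (qubit j+1 of the paper is index j here).
   The Hilbert space (C^2)^{\<otimes>N} is C^(2^N); computational basis state |b_0 ... b_{N-1}>
   has index i with b_j = bit j of i. Vectors in R^N are functions nat \<Rightarrow> real
   (only indices j < N matter). *)

definition qbit :: "nat \<Rightarrow> nat \<Rightarrow> bool" where
  "qbit i j = odd (i div 2 ^ j)"

definition Zop :: "nat \<Rightarrow> nat \<Rightarrow> complex mat" where
  "Zop N j = mat (2^N) (2^N) (\<lambda>(r, c). if r = c then (if qbit r j then -1 else 1) else 0)"

(* X^{\<otimes>N}: <r|X^{\<otimes>N}|c> = prod_j <r_j|X|c_j> = 1 iff all bits differ *)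
definition Xall :: "nat \<Rightarrow> complex mat" where
  "Xall N = mat (2^N) (2^N) (\<lambda>(r, c). if (\<forall>j<N. qbit r j \<noteq> qbit c j) then 1 else 0)"

definition vdotZ :: "nat \<Rightarrow> (nat \<Rightarrow> real) \<Rightarrow> complex mat" where
  "vdotZ N v = mat (2^N) (2^N) (\<lambda>(r, c). \<Sum>j<N. complex_of_real (v j) * (Zop N j $$ (r, c)))"

definition rdot :: "nat \<Rightarrow> (nat \<Rightarrow> real) \<Rightarrow> (nat \<Rightarrow> real) \<Rightarrow> real" where
  "rdot N v u = (\<Sum>j<N. v j * u j)"

(* |0_L> = tensor_j (cos theta_j |0> + i sin theta_j |1>) *)
definition ket0L :: "nat \<Rightarrow> (nat \<Rightarrow> real) \<Rightarrow> complex vec" where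
  "ket0L N \<theta> = vec (2^N) (\<lambda>i. \<Prod>j<N. if qbit i j then \<i> * complex_of_real (sin (\<theta> j))
                                          else complex_of_real (cos (\<theta> j)))"

definition ket1L :: "nat \<Rightarrow> (nat \<Rightarrow> real) \<Rightarrow> complex vec" where
  "ket1L N \<theta> = Xall N *\<^sub>v ket0L N \<theta>"

definition braket :: "complex vec \<Rightarrow> complex vec \<Rightarrow> complex" where
  "braket a b = (\<Sum>i<dim_vec a. cnj (a $ i) * b $ i)"

definition ketbra :: "complex vec \<Rightarrow> complex vec \<Rightarrow> complex mat" where
  "ketbra a b = mat (dim_vec a) (dim_vec b) (\<lambda>(r, c). a $ r * cnj (b $ c))"

definition codeP :: "nat \<Rightarrow> (nat \<Rightarrow> real) \<Rightarrow> complex mat" where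
  "codeP N \<theta> = ketbra (ket0L N \<theta>) (ket0L N \<theta>) + ketbra (ket1L N \<theta>) (ket1L N \<theta>)"

definition codeZL :: "nat \<Rightarrow> (nat \<Rightarrow> real) \<Rightarrow> complex mat" where
  "codeZL N \<theta> = ketbra (ket0L N \<theta>) (ket0L N \<theta>) - ketbra (ket1L N \<theta>) (ket1L N \<theta>)"

definition hamH :: "nat \<Rightarrow> (nat \<Rightarrow> real) \<Rightarrow> complex mat" where
  "hamH N h = complex_of_real (1/2) \<cdot>\<^sub>m vdotZ N h"

(* Lindblad operators L_k = sqrt(lambda_k) v_k . Z, where V k is the k-th eigenvector *)
definition lindL :: "nat \<Rightarrow> (nat \<Rightarrow> real) \<Rightarrow> (nat \<Rightarrow> nat \<Rightarrow> real) \<Rightarrow> nat \<Rightarrow> complex mat" where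
  "lindL N lam V k = complex_of_real (sqrt (lam k)) \<cdot>\<^sub>m vdotZ N (V k)"

inductive_set lindblad_span :: "nat \<Rightarrow> (nat \<Rightarrow> real) \<Rightarrow> (nat \<Rightarrow> nat \<Rightarrow> real) \<Rightarrow> complex mat set"
  for N lam V where
  zero: "0\<^sub>m (2^N) (2^N) \<in> lindblad_span N lam V"
| ident: "1\<^sub>m (2^N) \<in> lindblad_span N lam V"
| lin: "i < N \<Longrightarrow> lindL N lam V i \<in> lindblad_span N lam V"
| quad: "i < N \<Longrightarrow> j < N \<Longrightarrow> lindL N lam V i * lindL N lam V j \<in> lindblad_span N lam V"
| add: "S \<in> lindblad_span N lam V \<Longrightarrow> T \<in> lindblad_span N lam V \<Longrightarrow> S + T \<in> lindblad_span N lam V"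
| smult: "S \<in> lindblad_span N lam V \<Longrightarrow> complex_of_real r \<cdot>\<^sub>m S \<in> lindblad_span N lam V"

definition matvec :: "nat \<Rightarrow> (nat \<Rightarrow> nat \<Rightarrow> real) \<Rightarrow> (nat \<Rightarrow> real) \<Rightarrow> (nat \<Rightarrow> real)" where
  "matvec N C x = (\<lambda>i. \<Sum>j<N. C i j * x j)"

definition colspace :: "nat \<Rightarrow> (nat \<Rightarrow> nat \<Rightarrow> real) \<Rightarrow> (nat \<Rightarrow> real) set" where
  "colspace N C = {matvec N C x | x. True}"

end

theory Submission
  imports Defs
begin


no_notation vec_nth (infixl "$" 90)

lemma qbit_low: "i < 2^N \<Longrightarrow> qbit i N = False"
  by (simp add: qbit_def)

lemma qbit_high_same: "j < N \<Longrightarrow> qbit (k + 2^N) j = qbit k j"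
proof -
  assume j: "j < N"
  have "(2::nat)^N = 2^(N-j) * 2^j" using j by (simp add: power_add[symmetric])
  hence "(k + 2^N) div 2^j = k div 2^j + 2^(N-j)" by simp
  moreover have "even ((2::nat)^(N-j))" using j by simp
  ultimately show ?thesis by (simp add: qbit_def)
qed

lemma qbit_high_top: "k < 2^N \<Longrightarrow> qbit (k + 2^N) N = True"
  by (simp add: qbit_def)

lemma sum_prod_factor:
  fixes f :: "nat \<Rightarrow> bool \<Rightarrow> 'a::comm_semiring_1"
  shows "(\<Sum>i<2^N. \<Prod>j<N. f j (qbit i j)) = (\<Prod>j<N. f j False + f j True)"
proof (induction N arbitrary: f)
  case 0
  then show ?case by simp
next
  case (Suc N)
  have split: "(\<Sum>i<2^Suc N. g i) = (\<Sum>i<2^N. g i) + (\<Sum>i<2^N. g (i + 2^N))" for g :: "nat \<Rightarrow> 'a"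
  proof -
    have "(\<Sum>i<2^Suc N. g i) = sum g {0..<2^N} + sum g {2^N..<2^N+2^N}"
      by (subst sum.atLeastLessThan_concat) (auto simp: lessThan_atLeast0 mult_2)
    also have "sum g {2^N..<2^N+2^N} = (\<Sum>i<2^N. g (i + 2^N))"
      using sum.shift_bounds_nat_ivl[of g 0 "2^N" "2^N"] by (simp add: lessThan_atLeast0)
    finally show ?thesis by (simp add: lessThan_atLeast0)
  qed
  have A: "(\<Sum>i<2^N. \<Prod>j<Suc N. f j (qbit i j)) = (\<Sum>i<2^N. \<Prod>j<N. f j (qbit i j)) * f N False"
    by (simp add: sum_distrib_right qbit_low)
  have B: "(\<Sum>i<2^N. \<Prod>j<Suc N. f j (qbit (i+2^N) j)) = (\<Sum>i<2^N. \<Prod>j<N. f j (qbit i j)) * f N True"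
    by (simp add: sum_distrib_right qbit_high_top qbit_high_same)
  have "(\<Sum>i<2^Suc N. \<Prod>j<Suc N. f j (qbit i j)) = (\<Sum>i<2^N. \<Prod>j<N. f j (qbit i j)) * (f N False + f N True)"
    by (simp only: split A B) (simp add: distrib_left)
  then show ?case by (simp add: Suc)
qed




definition c0 :: "(nat\<Rightarrow>real) \<Rightarrow> nat \<Rightarrow> bool \<Rightarrow> complex" where
  "c0 \<theta> j b = (if b then \<i> * complex_of_real (sin (\<theta> j)) else complex_of_real (cos (\<theta> j)))"

lemma dim_ket0[simp]: "dim_vec (ket0L N \<theta>) = 2^N" by (simp add: ket0L_def)
lemma dim_ket1[simp]: "dim_vec (ket1L N \<theta>) = 2^N" by (simp add: ket1L_def Xall_def)

lemma ket0_nth: "i < 2^N \<Longrightarrow> ket0L N \<theta> $ i = (\<Prod>j<N. c0 \<theta> j (qbit i j))"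
  by (simp add: ket0L_def c0_def)

lemma ind_prod: "(if (\<forall>j<(N::nat). P j) then 1 else 0) = (\<Prod>j<N. if P j then 1 else (0::complex))"
  by (auto simp: prod_zero_iff)

lemma ket1_nth: "i < 2^N \<Longrightarrow> ket1L N \<theta> $ i = (\<Prod>j<N. c0 \<theta> j (\<not> qbit i j))"
proof -
  assume i: "i < 2^N"
  have "ket1L N \<theta> $ i = (\<Sum>c<2^N. (if (\<forall>j<N. qbit i j \<noteq> qbit c j) then 1 else 0) * (\<Prod>j<N. c0 \<theta> j (qbit c j)))"
    using i by (simp add: ket1L_def Xall_def mult_mat_vec_def scalar_prod_def ket0_nth lessThan_atLeast0)
  also have "\<dots> = (\<Sum>c<2^N. \<Prod>j<N. (if qbit i j \<noteq> qbit c j then 1 else 0) * c0 \<theta> j (qbit c j))"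
    by (simp only: ind_prod prod.distrib)
  also have "\<dots> = (\<Prod>j<N. c0 \<theta> j (\<not> qbit i j))"
    by (subst sum_prod_factor) (rule prod.cong, auto)
  finally show ?thesis .
qed

definition dg :: "nat \<Rightarrow> (nat \<Rightarrow> complex) \<Rightarrow> complex mat" where
  "dg N d = mat (2^N) (2^N) (\<lambda>(r, c). if r = c then d r else 0)"

definition bk :: "nat \<Rightarrow> complex vec \<Rightarrow> (nat \<Rightarrow> complex) \<Rightarrow> complex vec \<Rightarrow> complex" where
  "bk N x d y = (\<Sum>i<2^N. cnj (x $ i) * d i * y $ i)"

lemma bk_prod:
  assumes "\<And>i. i < 2^N \<Longrightarrow> x $ i = (\<Prod>j<N. \<phi> j (qbit i j))"
      and "\<And>i. i < 2^N \<Longrightarrow> y $ i = (\<Prod>j<N. \<psi> j (qbit i j))"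
      and "\<And>i. i < 2^N \<Longrightarrow> d i = (\<Prod>j<N. \<delta> j (qbit i j))"
  shows "bk N x d y = (\<Prod>j<N. cnj (\<phi> j False) * \<delta> j False * \<psi> j False + cnj (\<phi> j True) * \<delta> j True * \<psi> j True)"
proof -
  have "bk N x d y = (\<Sum>i<2^N. \<Prod>j<N. cnj (\<phi> j (qbit i j)) * \<delta> j (qbit i j) * \<psi> j (qbit i j))"
    unfolding bk_def by (rule sum.cong) (auto simp: assms cnj_prod prod.distrib)
  then show ?thesis using sum_prod_factor[of "\<lambda>j b. cnj (\<phi> j b) * \<delta> j b * \<psi> j b" N] by simp
qed

definition zs :: "nat \<Rightarrow> nat \<Rightarrow> complex" where
  "zs j i = (if qbit i j then -1 else 1)"

definition sg :: "nat \<Rightarrow> nat \<Rightarrow> bool \<Rightarrow> complex" where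
  "sg j l b = (if l = j then (if b then -1 else 1) else 1)"

lemma zs_prod: "j < N \<Longrightarrow> zs j i = (\<Prod>l<N. sg j l (qbit i l))"
  unfolding sg_def zs_def by (subst prod.delta) auto

lemma zs2_prod: "j < N \<Longrightarrow> k < N \<Longrightarrow> zs j i * zs k i = (\<Prod>l<N. sg j l (qbit i l) * sg k l (qbit i l))"
  by (simp add: zs_prod prod.distrib)

lemma one_prod: "(1::complex) = (\<Prod>l<N. (\<lambda>l b. 1) l (qbit i l))" by simp

lemma cs1: "complex_of_real (cos t) * complex_of_real (cos t) + complex_of_real (sin t) * complex_of_real (sin t) = 1"
  by (metis of_real_add of_real_mult of_real_1 sin_cos_squared_add3)

lemma cs2: "complex_of_real (cos t) * complex_of_real (cos t) - complex_of_real (sin t) * complex_of_real (sin t) = complex_of_real (cos (2*t))"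
  by (simp add: cos_double power2_eq_square)

lemma fac_aa: "cnj (c0 \<theta> l False) * ea * c0 \<theta> l False + cnj (c0 \<theta> l True) * eb * c0 \<theta> l True
   = ea * of_real (cos (\<theta> l))^2 + eb * of_real (sin (\<theta> l))^2"
  by (simp add: c0_def power2_eq_square algebra_simps)

lemma fac_bb: "cnj (c0 \<theta> l (\<not>False)) * ea * c0 \<theta> l (\<not>False) + cnj (c0 \<theta> l (\<not>True)) * eb * c0 \<theta> l (\<not>True)
   = ea * of_real (sin (\<theta> l))^2 + eb * of_real (cos (\<theta> l))^2"
  by (simp add: c0_def power2_eq_square algebra_simps)

lemma fac_ab: "cnj (c0 \<theta> l False) * ea * c0 \<theta> l (\<not>False) + cnj (c0 \<theta> l True) * eb * c0 \<theta> l (\<not>True)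
   = \<i> * of_real (sin (\<theta> l)) * of_real (cos (\<theta> l)) * (ea - eb)"
  by (simp add: c0_def power2_eq_square algebra_simps)

lemma fac_ba: "cnj (c0 \<theta> l (\<not>False)) * ea * c0 \<theta> l False + cnj (c0 \<theta> l (\<not>True)) * eb * c0 \<theta> l True
   = \<i> * of_real (sin (\<theta> l)) * of_real (cos (\<theta> l)) * (eb - ea)"
  by (simp add: c0_def power2_eq_square algebra_simps)




abbreviation "cc \<theta> l \<equiv> complex_of_real (cos (\<theta> l))"
abbreviation "ss \<theta> l \<equiv> complex_of_real (sin (\<theta> l))"

lemma GA: assumes "\<And>i. i < 2^N \<Longrightarrow> d i = (\<Prod>l<N. if qbit i l then e l else 1)"
  shows "bk N (ket0L N \<theta>) d (ket0L N \<theta>) = (\<Prod>l<N. (cc \<theta> l)^2 + e l * (ss \<theta> l)^2)"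
  by (subst bk_prod[where \<phi>="c0 \<theta>" and \<psi>="c0 \<theta>" and \<delta>="\<lambda>l b. if b then e l else 1"])
     (auto simp: ket0_nth assms fac_aa[where ea=1, simplified])

lemma GB: assumes "\<And>i. i < 2^N \<Longrightarrow> d i = (\<Prod>l<N. if qbit i l then e l else 1)"
  shows "bk N (ket1L N \<theta>) d (ket1L N \<theta>) = (\<Prod>l<N. (ss \<theta> l)^2 + e l * (cc \<theta> l)^2)"
  apply (subst bk_prod[where \<phi>="\<lambda>j b. c0 \<theta> j (\<not>b)" and \<psi>="\<lambda>j b. c0 \<theta> j (\<not>b)" and \<delta>="\<lambda>l b. if b then e l else 1"])
  using fac_bb[where ea=1, simplified] by (auto simp: ket1_nth assms)

lemma GAB: assumes "\<And>i. i < 2^N \<Longrightarrow> d i = (\<Prod>l<N. if qbit i l then e l else 1)"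
  shows "bk N (ket0L N \<theta>) d (ket1L N \<theta>) = (\<Prod>l<N. \<i> * ss \<theta> l * cc \<theta> l * (1 - e l))"
  apply (subst bk_prod[where \<phi>="c0 \<theta>" and \<psi>="\<lambda>j b. c0 \<theta> j (\<not>b)" and \<delta>="\<lambda>l b. if b then e l else 1"])
  using fac_ab[where ea=1, simplified] by (auto simp: ket0_nth ket1_nth assms)

lemma GBA: assumes "\<And>i. i < 2^N \<Longrightarrow> d i = (\<Prod>l<N. if qbit i l then e l else 1)"
  shows "bk N (ket1L N \<theta>) d (ket0L N \<theta>) = (\<Prod>l<N. \<i> * ss \<theta> l * cc \<theta> l * (e l - 1))"
  apply (subst bk_prod[where \<phi>="\<lambda>j b. c0 \<theta> j (\<not>b)" and \<psi>="c0 \<theta>" and \<delta>="\<lambda>l b. if b then e l else 1"])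
  using fac_ba[where ea=1, simplified] by (auto simp: ket0_nth ket1_nth assms)

lemma cs1': "(cc \<theta> l)^2 + (ss \<theta> l)^2 = 1"
  by (metis of_real_add of_real_power of_real_1 sin_cos_squared_add2)
lemma cs2': "(cc \<theta> l)^2 - (ss \<theta> l)^2 = complex_of_real (cos (2 * \<theta> l))"
  by (simp add: cos_double)

lemma cs1'': "(ss \<theta> l)^2 + (cc \<theta> l)^2 = 1"
  by (metis of_real_add of_real_power of_real_1 sin_cos_squared_add)




abbreviation "ka N \<theta> \<equiv> ket0L N \<theta>"
abbreviation "kb N \<theta> \<equiv> ket1L N \<theta>"
abbreviation "C2 \<theta> l \<equiv> complex_of_real (cos (2 * \<theta> l))"

lemma prod_zero_ex: "l < (N::nat) \<Longrightarrow> f l = (0::complex) \<Longrightarrow> (\<Prod>l<N. f l) = 0"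
  by (rule prod_zero) auto+

lemma K0:
  assumes "N > 0"
  shows "bk N (ka N \<theta>) (\<lambda>i. 1) (ka N \<theta>) = 1" "bk N (kb N \<theta>) (\<lambda>i. 1) (kb N \<theta>) = 1"
        "bk N (ka N \<theta>) (\<lambda>i. 1) (kb N \<theta>) = 0" "bk N (kb N \<theta>) (\<lambda>i. 1) (ka N \<theta>) = 0"
proof -
  have d: "\<And>i. i < 2^N \<Longrightarrow> (1::complex) = (\<Prod>l<N. if qbit i l then (\<lambda>l. 1) l else 1)" by simp
  show "bk N (ka N \<theta>) (\<lambda>i. 1) (ka N \<theta>) = 1" using GA[OF d] by (simp add: cs1')
  show "bk N (kb N \<theta>) (\<lambda>i. 1) (kb N \<theta>) = 1" using GB[OF d] by (simp add: cs1' add.commute)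
  show "bk N (ka N \<theta>) (\<lambda>i. 1) (kb N \<theta>) = 0" using GAB[OF d] assms by simp
  show "bk N (kb N \<theta>) (\<lambda>i. 1) (ka N \<theta>) = 0" using GBA[OF d] assms by simp
qed

lemma zs_e: "j < N \<Longrightarrow> zs j i = (\<Prod>l<N. if qbit i l then (\<lambda>l. if l = j then -1 else 1) l else 1)"
proof -
  assume j: "j < N"
  have "(\<Prod>l<N. if qbit i l then (\<lambda>l. if l = j then -1 else 1) l else (1::complex))
      = (\<Prod>l<N. if l = j then (if qbit i j then -1 else 1) else 1)"
    by (rule prod.cong) auto
  also have "\<dots> = zs j i" using j by (simp add: zs_def)
  finally show ?thesis by simp
qed

lemma K1:
  assumes "N \<ge> 2" "j < N"
  shows "bk N (ka N \<theta>) (zs j) (ka N \<theta>) = C2 \<theta> j" "bk N (kb N \<theta>) (zs j) (kb N \<theta>) = - C2 \<theta> j"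
        "bk N (ka N \<theta>) (zs j) (kb N \<theta>) = 0" "bk N (kb N \<theta>) (zs j) (ka N \<theta>) = 0"
proof -
  let ?e = "\<lambda>l. if l = j then -1 else (1::complex)"
  have d: "\<And>i. i < 2^N \<Longrightarrow> zs j i = (\<Prod>l<N. if qbit i l then ?e l else 1)" using zs_e assms by blast
  have GAx: "bk N (ka N \<theta>) (zs j) (ka N \<theta>) = (\<Prod>l<N. (cc \<theta> l)^2 + ?e l * (ss \<theta> l)^2)" by (rule GA) (rule d)
  have GBx: "bk N (kb N \<theta>) (zs j) (kb N \<theta>) = (\<Prod>l<N. (ss \<theta> l)^2 + ?e l * (cc \<theta> l)^2)" by (rule GB) (rule d)
  have GABx: "bk N (ka N \<theta>) (zs j) (kb N \<theta>) = (\<Prod>l<N. \<i> * ss \<theta> l * cc \<theta> l * (1 - ?e l))" by (rule GAB) (rule d)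
  have GBAx: "bk N (kb N \<theta>) (zs j) (ka N \<theta>) = (\<Prod>l<N. \<i> * ss \<theta> l * cc \<theta> l * (?e l - 1))" by (rule GBA) (rule d)
  obtain l where l: "l < N" "l \<noteq> j" using assms by (metis One_nat_def Suc_1 Suc_le_lessD less_Suc_eq_0_disj less_one not_less_eq_eq)
  have "bk N (ka N \<theta>) (zs j) (ka N \<theta>) = (\<Prod>l<N. if l = j then C2 \<theta> j else 1)"
    unfolding GAx by (rule prod.cong) (auto simp: cs1' cs2'[symmetric])
  then show "bk N (ka N \<theta>) (zs j) (ka N \<theta>) = C2 \<theta> j" using assms by simp
  have "bk N (kb N \<theta>) (zs j) (kb N \<theta>) = (\<Prod>l<N. if l = j then - C2 \<theta> j else 1)"
    unfolding GBx by (rule prod.cong) (auto simp: cs1'' cs2'[symmetric])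
  then show "bk N (kb N \<theta>) (zs j) (kb N \<theta>) = - C2 \<theta> j" using assms by simp
  show "bk N (ka N \<theta>) (zs j) (kb N \<theta>) = 0" unfolding GABx using l by (intro prod_zero_ex[of l]) auto
  show "bk N (kb N \<theta>) (zs j) (ka N \<theta>) = 0" unfolding GBAx using l by (intro prod_zero_ex[of l]) auto
qed

lemma K2:
  assumes "N \<ge> 3" "j < N" "k < N" "j \<noteq> k"
  shows "bk N (ka N \<theta>) (\<lambda>i. zs j i * zs k i) (ka N \<theta>) = C2 \<theta> j * C2 \<theta> k"
        "bk N (kb N \<theta>) (\<lambda>i. zs j i * zs k i) (kb N \<theta>) = C2 \<theta> j * C2 \<theta> k"
        "bk N (ka N \<theta>) (\<lambda>i. zs j i * zs k i) (kb N \<theta>) = 0" "bk N (kb N \<theta>) (\<lambda>i. zs j i * zs k i) (ka N \<theta>) = 0"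
proof -
  let ?e = "\<lambda>l. (if l = j then -1 else (1::complex)) * (if l = k then -1 else 1)"
  have d: "\<And>i. i < 2^N \<Longrightarrow> zs j i * zs k i = (\<Prod>l<N. if qbit i l then ?e l else 1)"
    by (subst zs_e[OF assms(2)], subst zs_e[OF assms(3)], subst prod.distrib[symmetric], rule prod.cong) auto
  have GAx: "bk N (ka N \<theta>) (\<lambda>i. zs j i * zs k i) (ka N \<theta>) = (\<Prod>l<N. (cc \<theta> l)^2 + ?e l * (ss \<theta> l)^2)" by (rule GA) (rule d)
  have GBx: "bk N (kb N \<theta>) (\<lambda>i. zs j i * zs k i) (kb N \<theta>) = (\<Prod>l<N. (ss \<theta> l)^2 + ?e l * (cc \<theta> l)^2)" by (rule GB) (rule d)
  have GABx: "bk N (ka N \<theta>) (\<lambda>i. zs j i * zs k i) (kb N \<theta>) = (\<Prod>l<N. \<i> * ss \<theta> l * cc \<theta> l * (1 - ?e l))" by (rule GAB) (rule d)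
  have GBAx: "bk N (kb N \<theta>) (\<lambda>i. zs j i * zs k i) (ka N \<theta>) = (\<Prod>l<N. \<i> * ss \<theta> l * cc \<theta> l * (?e l - 1))" by (rule GBA) (rule d)
  obtain l where l: "l < N" "l \<noteq> j" "l \<noteq> k"
  proof -
    have "card ({..<N} - {j,k}) > 0" using assms by (simp add: card_Diff_subset)
    then obtain l where "l \<in> {..<N} - {j,k}" by (metis card_gt_0_iff ex_in_conv)
    then show ?thesis using that by auto
  qed
  have "bk N (ka N \<theta>) (\<lambda>i. zs j i * zs k i) (ka N \<theta>) = (\<Prod>l<N. (if l = j then C2 \<theta> j else 1) * (if l = k then C2 \<theta> k else 1))"
    unfolding GAx by (rule prod.cong) (auto simp: cs1' cs2'[symmetric] assms(4))
  then show "bk N (ka N \<theta>) (\<lambda>i. zs j i * zs k i) (ka N \<theta>) = C2 \<theta> j * C2 \<theta> k" using assms by (simp add: prod.distrib)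
  have "bk N (kb N \<theta>) (\<lambda>i. zs j i * zs k i) (kb N \<theta>) = (\<Prod>l<N. (if l = j then - C2 \<theta> j else 1) * (if l = k then - C2 \<theta> k else 1))"
    unfolding GBx by (rule prod.cong) (auto simp: cs1'' cs2'[symmetric] assms(4))
  then show "bk N (kb N \<theta>) (\<lambda>i. zs j i * zs k i) (kb N \<theta>) = C2 \<theta> j * C2 \<theta> k" using assms by (simp add: prod.distrib)
  show "bk N (ka N \<theta>) (\<lambda>i. zs j i * zs k i) (kb N \<theta>) = 0" unfolding GABx using l by (intro prod_zero_ex[of l]) auto
  show "bk N (kb N \<theta>) (\<lambda>i. zs j i * zs k i) (ka N \<theta>) = 0" unfolding GBAx using l by (intro prod_zero_ex[of l]) auto
qed




lemma dg_carrier[simp]: "dg N d \<in> carrier_mat (2^N) (2^N)" by (simp add: dg_def)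
lemma dg_dims[simp]: "dim_row (dg N d) = 2^N" "dim_col (dg N d) = 2^N" by (simp_all add: dg_def)
lemma dg_idx: "r < 2^N \<Longrightarrow> c < 2^N \<Longrightarrow> dg N d $$ (r,c) = (if r = c then d r else 0)" by (simp add: dg_def)

lemma vdotZ_dg: "vdotZ N v = dg N (\<lambda>i. \<Sum>j<N. complex_of_real (v j) * zs j i)"
  by (rule eq_matI) (auto simp: vdotZ_def dg_def Zop_def zs_def)

lemma smult_dg: "k \<cdot>\<^sub>m dg N d = dg N (\<lambda>i. k * d i)"
  by (rule eq_matI) (auto simp: dg_def)

lemma sum_delta_r: "finite S \<Longrightarrow> (\<Sum>k\<in>S. f k * (if k = l then g k else 0)) = (if l \<in> S then f l * g l else (0::complex))"
  by (simp add: if_distrib[where f="\<lambda>x. f _ * x"] cong: if_cong) 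

lemma mult_dg: "dg N d * dg N e = dg N (\<lambda>i. d i * e i)"
proof (rule eq_matI)
  fix r c assume rc: "r < dim_row (dg N (\<lambda>i. d i * e i))" "c < dim_col (dg N (\<lambda>i. d i * e i))"
  have "(dg N d * dg N e) $$ (r,c) = (\<Sum>k\<in>{0..<2^N}. dg N d $$ (r,k) * dg N e $$ (k,c))"
    using rc by (simp add: scalar_prod_def)
  also have "\<dots> = (\<Sum>k\<in>{0..<2^N}. (if r = k then d r else 0) * (if k = c then e k else 0))"
    using rc by (intro sum.cong) (auto simp: dg_idx)
  also have "\<dots> = (\<Sum>k\<in>{0..<2^N}. if k = r then (if r = c then d r * e r else 0) else 0)"
    by (intro sum.cong) auto
  also have "\<dots> = dg N (\<lambda>i. d i * e i) $$ (r,c)" using rc by (auto simp: dg_idx)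
  finally show "(dg N d * dg N e) $$ (r,c) = dg N (\<lambda>i. d i * e i) $$ (r,c)" .
qed auto

lemma one_dg: "1\<^sub>m (2^N) = dg N (\<lambda>i. 1)" by (rule eq_matI) (auto simp: dg_def)
lemma zero_dg: "0\<^sub>m (2^N) (2^N) = dg N (\<lambda>i. 0)" by (rule eq_matI) (auto simp: dg_def)

lemma ketbra_carrier[simp]: "ketbra (ket0L N \<theta>) (ket0L N \<theta>) \<in> carrier_mat (2^N) (2^N)"
   "ketbra (ket1L N \<theta>) (ket1L N \<theta>) \<in> carrier_mat (2^N) (2^N)" by (simp_all add: ketbra_def)

lemma codeP_carrier[simp]: "codeP N \<theta> \<in> carrier_mat (2^N) (2^N)"
  by (simp add: codeP_def)
lemma codeP_dims[simp]: "dim_row (codeP N \<theta>) = 2^N" "dim_col (codeP N \<theta>) = 2^N"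
  using codeP_carrier by (auto simp del: codeP_carrier)
lemma codeZL_carrier[simp]: "codeZL N \<theta> \<in> carrier_mat (2^N) (2^N)"
  unfolding codeZL_def by (rule minus_carrier_mat) simp

lemma codeP_idx: "r < 2^N \<Longrightarrow> c < 2^N \<Longrightarrow> codeP N \<theta> $$ (r,c) =
   ka N \<theta> $ r * cnj (ka N \<theta> $ c) + kb N \<theta> $ r * cnj (kb N \<theta> $ c)"
  by (simp add: codeP_def ketbra_def)
lemma codeZL_idx: "r < 2^N \<Longrightarrow> c < 2^N \<Longrightarrow> codeZL N \<theta> $$ (r,c) =
   ka N \<theta> $ r * cnj (ka N \<theta> $ c) - kb N \<theta> $ r * cnj (kb N \<theta> $ c)"
  by (simp add: codeZL_def ketbra_def)

lemma ring4: "((ar::complex)*cal + br*cbl) * dl * (al*cac + bl*cbc) = ar*cac*(cal*dl*al) + ar*cbc*(cal*dl*bl) + br*cac*(cbl*dl*al) + br*cbc*(cbl*dl*bl)"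
  by (simp add: ring_distribs mult_ac add_ac)

lemma PDP_idx:
  assumes rc: "r < 2^N" "c < 2^N"
  shows "(codeP N \<theta> * dg N d * codeP N \<theta>) $$ (r,c) =
     ka N \<theta> $ r * cnj (ka N \<theta> $ c) * bk N (ka N \<theta>) d (ka N \<theta>)
   + ka N \<theta> $ r * cnj (kb N \<theta> $ c) * bk N (ka N \<theta>) d (kb N \<theta>)
   + kb N \<theta> $ r * cnj (ka N \<theta> $ c) * bk N (kb N \<theta>) d (ka N \<theta>)
   + kb N \<theta> $ r * cnj (kb N \<theta> $ c) * bk N (kb N \<theta>) d (kb N \<theta>)"
proof -
  let ?a = "ka N \<theta>" and ?b = "kb N \<theta>" and ?P = "codeP N \<theta>"
  have PD: "(?P * dg N d) $$ (r,l) = ?P $$ (r,l) * d l" if l: "l < 2^N" for l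
  proof -
    have "(?P * dg N d) $$ (r,l) = (\<Sum>k\<in>{0..<2^N}. ?P $$ (r,k) * dg N d $$ (k,l))"
      using rc l by (simp add: scalar_prod_def)
    also have "\<dots> = (\<Sum>k\<in>{0..<2^N}. ?P $$ (r,k) * (if k = l then d k else 0))"
      using l by (intro sum.cong) (auto simp: dg_idx)
    also have "\<dots> = ?P $$ (r,l) * d l" using l by (subst sum_delta_r) auto
    finally show ?thesis .
  qed
  have "(?P * dg N d * ?P) $$ (r,c) = (\<Sum>l\<in>{0..<2^N}. (?P * dg N d) $$ (r,l) * ?P $$ (l,c))"
    using rc by (simp add: scalar_prod_def)
  also have "\<dots> = (\<Sum>l<2^N. 
       ?a $ r * cnj (?a $ c) * (cnj (?a $ l) * d l * ?a $ l)
     + ?a $ r * cnj (?b $ c) * (cnj (?a $ l) * d l * ?b $ l)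
     + ?b $ r * cnj (?a $ c) * (cnj (?b $ l) * d l * ?a $ l)
     + ?b $ r * cnj (?b $ c) * (cnj (?b $ l) * d l * ?b $ l))"
    unfolding lessThan_atLeast0
    by (intro sum.cong refl) (simp only: PD codeP_idx rc atLeastLessThan_iff ring4)
  also have "\<dots> = ?a $ r * cnj (?a $ c) * bk N ?a d ?a + ?a $ r * cnj (?b $ c) * bk N ?a d ?b
     + ?b $ r * cnj (?a $ c) * bk N ?b d ?a + ?b $ r * cnj (?b $ c) * bk N ?b d ?b"
    unfolding bk_def sum.distrib sum_distrib_left ..
  finally show ?thesis .
qed

lemma G1:
  assumes "bk N (ka N \<theta>) d (kb N \<theta>) = 0" "bk N (kb N \<theta>) d (ka N \<theta>) = 0"
    "bk N (ka N \<theta>) d (ka N \<theta>) = x" "bk N (kb N \<theta>) d (kb N \<theta>) = x"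
  shows "codeP N \<theta> * dg N d * codeP N \<theta> = x \<cdot>\<^sub>m codeP N \<theta>"
  by (rule eq_matI) (auto simp del: index_mult_mat(1) simp: PDP_idx codeP_idx assms algebra_simps)

lemma G2:
  assumes "bk N (ka N \<theta>) d (kb N \<theta>) = 0" "bk N (kb N \<theta>) d (ka N \<theta>) = 0"
    "bk N (ka N \<theta>) d (ka N \<theta>) = x" "bk N (kb N \<theta>) d (kb N \<theta>) = - x"
  shows "codeP N \<theta> * dg N d * codeP N \<theta> = x \<cdot>\<^sub>m codeZL N \<theta>"
  by (rule eq_matI) (auto simp del: index_mult_mat(1) simp: PDP_idx codeZL_idx assms algebra_simps codeZL_def ketbra_def)

lemma bk_sum: "bk N x (\<lambda>i. \<Sum>j\<in>A. w j * f j i) y = (\<Sum>j\<in>A. w j * bk N x (f j) y)"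
  unfolding bk_def by (simp add: sum_distrib_left sum_distrib_right sum.swap[of _ A] algebra_simps)

lemma bk_smult: "bk N x (\<lambda>i. k * f i) y = k * bk N x f y"
  unfolding bk_def by (simp add: sum_distrib_left algebra_simps)




definition dv :: "nat \<Rightarrow> (nat \<Rightarrow> real) \<Rightarrow> nat \<Rightarrow> complex" where
  "dv N v i = (\<Sum>j<N. complex_of_real (v j) * zs j i)"

lemma L4:
  assumes "N \<ge> 2"
  shows "bk N (ka N \<theta>) (dv N v) (ka N \<theta>) = complex_of_real (rdot N v (\<lambda>j. cos (2 * \<theta> j)))"
        "bk N (kb N \<theta>) (dv N v) (kb N \<theta>) = - complex_of_real (rdot N v (\<lambda>j. cos (2 * \<theta> j)))"
        "bk N (ka N \<theta>) (dv N v) (kb N \<theta>) = 0"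
        "bk N (kb N \<theta>) (dv N v) (ka N \<theta>) = 0"
  using assms unfolding dv_def bk_sum rdot_def
  by (auto simp: K1 sum_negf[symmetric] intro!: sum.cong)

definition qq :: "(nat \<Rightarrow> real) \<Rightarrow> nat \<Rightarrow> nat \<Rightarrow> real" where
  "qq \<theta> j k = (if j = k then 1 else cos (2 * \<theta> j) * cos (2 * \<theta> k))"

lemma zs_sq: "zs j i * zs j i = 1" by (simp add: zs_def)

lemma KK:
  assumes "N \<ge> 3" "j < N" "k < N"
  shows "bk N (ka N \<theta>) (\<lambda>i. zs j i * zs k i) (ka N \<theta>) = complex_of_real (qq \<theta> j k)"
        "bk N (kb N \<theta>) (\<lambda>i. zs j i * zs k i) (kb N \<theta>) = complex_of_real (qq \<theta> j k)"
        "bk N (ka N \<theta>) (\<lambda>i. zs j i * zs k i) (kb N \<theta>) = 0"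
        "bk N (kb N \<theta>) (\<lambda>i. zs j i * zs k i) (ka N \<theta>) = 0"
proof -
  have N0: "N > 0" using assms by simp
  show "bk N (ka N \<theta>) (\<lambda>i. zs j i * zs k i) (ka N \<theta>) = complex_of_real (qq \<theta> j k)"
    using K0(1)[OF N0] K2(1)[OF assms] by (cases "j = k") (auto simp: zs_sq qq_def)
  show "bk N (kb N \<theta>) (\<lambda>i. zs j i * zs k i) (kb N \<theta>) = complex_of_real (qq \<theta> j k)"
    using K0(2)[OF N0] K2(2)[OF assms] by (cases "j = k") (auto simp: zs_sq qq_def)
  show "bk N (ka N \<theta>) (\<lambda>i. zs j i * zs k i) (kb N \<theta>) = 0"
    using K0(3)[OF N0] K2(3)[OF assms] by (cases "j = k") (auto simp: zs_sq)
  show "bk N (kb N \<theta>) (\<lambda>i. zs j i * zs k i) (ka N \<theta>) = 0"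
    using K0(4)[OF N0] K2(4)[OF assms] by (cases "j = k") (auto simp: zs_sq)
qed

definition RR :: "nat \<Rightarrow> (nat \<Rightarrow> real) \<Rightarrow> (nat \<Rightarrow> real) \<Rightarrow> (nat \<Rightarrow> real) \<Rightarrow> real" where
  "RR N \<theta> v u = (\<Sum>j<N. v j * (\<Sum>k<N. u k * qq \<theta> j k))"

lemma dv_prod: "dv N v i * dv N u i = (\<Sum>j<N. complex_of_real (v j) * (\<Sum>k<N. complex_of_real (u k) * (zs j i * zs k i)))"
  unfolding dv_def sum_product by (simp add: algebra_simps sum_distrib_left)

lemma L5:
  assumes "N \<ge> 3"
  shows "bk N (ka N \<theta>) (\<lambda>i. dv N v i * dv N u i) (ka N \<theta>) = complex_of_real (RR N \<theta> v u)"
        "bk N (kb N \<theta>) (\<lambda>i. dv N v i * dv N u i) (kb N \<theta>) = complex_of_real (RR N \<theta> v u)"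
        "bk N (ka N \<theta>) (\<lambda>i. dv N v i * dv N u i) (kb N \<theta>) = 0"
        "bk N (kb N \<theta>) (\<lambda>i. dv N v i * dv N u i) (ka N \<theta>) = 0"
  using assms unfolding dv_prod bk_sum RR_def
  by (auto simp: KK intro!: sum.cong)

lemma colspace_zero:
  assumes "\<forall>k<N. \<forall>i<N. matvec N C (V k) i = lam k * V k i"
      and "\<forall>w \<in> colspace N C. rdot N c w = 0"
      and "k < N"
  shows "sqrt (lam k) * rdot N (V k) c = 0"
proof (cases "lam k = 0")
  case False
  let ?w = "matvec N C (\<lambda>j. V k j / lam k)"
  have w: "?w \<in> colspace N C" by (auto simp: colspace_def)
  have "?w j = V k j" if "j < N" for j
  proof -
    have "?w j = matvec N C (V k) j / lam k"
      by (simp add: matvec_def sum_divide_distrib)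
    then show ?thesis using assms(1) assms(3) that False by simp
  qed
  then have "rdot N (V k) c = rdot N c ?w" by (auto simp: rdot_def mult.commute intro!: sum.cong)
  then show ?thesis using assms(2) w by simp
qed simp




lemma braket_bk: "braket (ket0L N \<theta>) x = bk N (ket0L N \<theta>) (\<lambda>i. 1) x"
  "braket (ket1L N \<theta>) x = bk N (ket1L N \<theta>) (\<lambda>i. 1) x"
  by (simp_all add: braket_def bk_def)

lemma part4: "N \<ge> 2 \<Longrightarrow> codeP N \<theta> * vdotZ N v * codeP N \<theta>
              = complex_of_real (rdot N v (\<lambda>j. cos (2 * \<theta> j))) \<cdot>\<^sub>m codeZL N \<theta>"
  unfolding vdotZ_dg dv_def[symmetric] by (rule G2) (simp_all add: L4)

lemma part5: "N \<ge> 3 \<Longrightarrow> codeP N \<theta> * vdotZ N v * vdotZ N u * codeP N \<theta>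
              = complex_of_real (RR N \<theta> v u) \<cdot>\<^sub>m codeP N \<theta>"
proof -
  assume N: "N \<ge> 3"
  have "codeP N \<theta> * vdotZ N v * vdotZ N u = codeP N \<theta> * (vdotZ N v * vdotZ N u)"
    by (rule assoc_mult_mat[of _ "2^N" "2^N" _ "2^N" _ "2^N"]) (auto simp: vdotZ_dg)
  also have "vdotZ N v * vdotZ N u = dg N (\<lambda>i. dv N v i * dv N u i)"
    unfolding vdotZ_dg dv_def[symmetric] mult_dg ..
  finally show ?thesis using N by (simp add: G1 L5)
qed

lemma lindL_dg: "lindL N lam V k = dg N (\<lambda>i. complex_of_real (sqrt (lam k)) * dv N (V k) i)"
  unfolding lindL_def vdotZ_dg dv_def[symmetric] smult_dg ..

lemma span_prop:
  assumes N: "N \<ge> 3"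
    and eig: "\<forall>k<N. \<forall>i<N. matvec N C (V k) i = lam k * V k i"
    and col: "\<forall>w \<in> colspace N C. rdot N (\<lambda>j. cos (2 * \<theta> j)) w = 0"
    and S: "S \<in> lindblad_span N lam V"
  shows "S \<in> carrier_mat (2^N) (2^N) \<and> (\<exists>r :: real.
                   codeP N \<theta> * S * codeP N \<theta> = complex_of_real r \<cdot>\<^sub>m codeP N \<theta>)"
  using S
proof (induction rule: lindblad_span.induct)
  case zero
  have "codeP N \<theta> * dg N (\<lambda>i. 0) * codeP N \<theta> = complex_of_real 0 \<cdot>\<^sub>m codeP N \<theta>"
    by (rule G1) (simp_all add: bk_def)
  then show ?case unfolding zero_dg by (intro conjI exI[of _ 0]) auto
next
  case ident
  have N0: "N > 0" using N by simp
  have "codeP N \<theta> * dg N (\<lambda>i. 1) * codeP N \<theta> = complex_of_real 1 \<cdot>\<^sub>m codeP N \<theta>"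
    by (rule G1) (simp_all add: K0[OF N0])
  then show ?case unfolding one_dg by (intro conjI exI[of _ 1]) auto
next
  case (lin i)
  let ?c = "\<lambda>j. cos (2 * \<theta> j)"
  have z: "complex_of_real (sqrt (lam i)) * complex_of_real (rdot N (V i) ?c) = 0"
    using colspace_zero[OF eig col lin] by (metis of_real_0 of_real_mult)
  have "codeP N \<theta> * dg N (\<lambda>x. complex_of_real (sqrt (lam i)) * dv N (V i) x) * codeP N \<theta> = complex_of_real 0 \<cdot>\<^sub>m codeP N \<theta>"
    by (rule G1) (use N z in \<open>simp_all add: bk_smult L4\<close>)
  then show ?case unfolding lindL_dg by (intro conjI exI[of _ 0]) auto
next
  case (quad i j)
  let ?s = "sqrt (lam i) * sqrt (lam j)"
  have e: "(\<lambda>x. complex_of_real (sqrt (lam i)) * dv N (V i) x * (complex_of_real (sqrt (lam j)) * dv N (V j) x))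
        = (\<lambda>x. complex_of_real ?s * (dv N (V i) x * dv N (V j) x))" by (auto simp: algebra_simps)
  have "codeP N \<theta> * dg N (\<lambda>x. complex_of_real ?s * (dv N (V i) x * dv N (V j) x)) * codeP N \<theta>
      = complex_of_real (?s * RR N \<theta> (V i) (V j)) \<cdot>\<^sub>m codeP N \<theta>"
    by (rule G1) (use N in \<open>simp_all add: bk_smult L5\<close>)
  then show ?case unfolding lindL_dg mult_dg e by (intro conjI exI[of _ "?s * RR N \<theta> (V i) (V j)"]) auto
next
  case (add S T)
  then obtain r1 r2 where r: "codeP N \<theta> * S * codeP N \<theta> = complex_of_real r1 \<cdot>\<^sub>m codeP N \<theta>"
     "codeP N \<theta> * T * codeP N \<theta> = complex_of_real r2 \<cdot>\<^sub>m codeP N \<theta>" by blast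
  have cS: "S \<in> carrier_mat (2^N) (2^N)" and cT: "T \<in> carrier_mat (2^N) (2^N)" using add by auto
  have "codeP N \<theta> * (S + T) * codeP N \<theta> = codeP N \<theta> * S * codeP N \<theta> + codeP N \<theta> * T * codeP N \<theta>"
    using cS cT by (simp add: mult_add_distrib_mat[of _ "2^N" "2^N"], subst add_mult_distrib_mat[of _ "2^N" "2^N"], auto)
  also have "\<dots> = complex_of_real (r1 + r2) \<cdot>\<^sub>m codeP N \<theta>"
    unfolding r of_real_add by (rule add_smult_distrib_right_mat[symmetric]) (rule codeP_carrier)
  finally have calc: "codeP N \<theta> * (S + T) * codeP N \<theta> = complex_of_real (r1 + r2) \<cdot>\<^sub>m codeP N \<theta>" .
  show ?case using cS cT calc by (auto simp del: of_real_add intro!: exI[of _ "r1+r2"])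
next
  case (smult S r)
  then obtain r1 where r: "codeP N \<theta> * S * codeP N \<theta> = complex_of_real r1 \<cdot>\<^sub>m codeP N \<theta>" by blast
  have cS: "S \<in> carrier_mat (2^N) (2^N)" using smult by auto
  have "codeP N \<theta> * (complex_of_real r \<cdot>\<^sub>m S) * codeP N \<theta> = complex_of_real r \<cdot>\<^sub>m (codeP N \<theta> * S * codeP N \<theta>)"
  proof -
    have 1: "codeP N \<theta> * (complex_of_real r \<cdot>\<^sub>m S) = complex_of_real r \<cdot>\<^sub>m (codeP N \<theta> * S)"
      by (rule mult_smult_distrib[of _ "2^N" "2^N" _ "2^N"]) (use cS in auto)
    have 2: "complex_of_real r \<cdot>\<^sub>m (codeP N \<theta> * S) * codeP N \<theta> = complex_of_real r \<cdot>\<^sub>m (codeP N \<theta> * S * codeP N \<theta>)"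
      by (rule mult_smult_assoc_mat[of _ "2^N" "2^N" _ "2^N"]) (use cS in auto)
    show ?thesis unfolding 1 2 ..
  qed
  also have "\<dots> = complex_of_real (r * r1) \<cdot>\<^sub>m codeP N \<theta>"
    unfolding r by (rule eq_matI) auto
  finally have calc: "codeP N \<theta> * (complex_of_real r \<cdot>\<^sub>m S) * codeP N \<theta> = complex_of_real (r * r1) \<cdot>\<^sub>m codeP N \<theta>" .
  show ?case using cS calc by (auto simp del: of_real_mult intro!: exI[of _ "r*r1"])
qed

lemma hamH_part: "N \<ge> 2 \<Longrightarrow> codeP N \<theta> * hamH N h * codeP N \<theta>
                  = complex_of_real (1/2 * rdot N h (\<lambda>j. cos (2 * \<theta> j))) \<cdot>\<^sub>m codeZL N \<theta>"
  unfolding hamH_def vdotZ_dg dv_def[symmetric] smult_dg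
  by (rule G2) (simp_all only: bk_smult L4, simp_all)

theorem mainTheorem3:
  fixes N :: nat and \<theta> :: "nat \<Rightarrow> real"
  assumes N3: "N \<ge> 3"
  shows "braket (ket0L N \<theta>) (ket0L N \<theta>) = 1
       \<and> braket (ket1L N \<theta>) (ket1L N \<theta>) = 1
       \<and> braket (ket0L N \<theta>) (ket1L N \<theta>) = 0
       \<and> (\<forall>v :: nat \<Rightarrow> real.
            codeP N \<theta> * vdotZ N v * codeP N \<theta>
              = complex_of_real (rdot N v (\<lambda>j. cos (2 * \<theta> j))) \<cdot>\<^sub>m codeZL N \<theta>)
       \<and> (\<forall>v u :: nat \<Rightarrow> real. \<exists>r :: real.
            codeP N \<theta> * vdotZ N v * vdotZ N u * codeP N \<theta>
              = complex_of_real r \<cdot>\<^sub>m codeP N \<theta>)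
       \<and> (\<forall>(C :: nat \<Rightarrow> nat \<Rightarrow> real) (V :: nat \<Rightarrow> nat \<Rightarrow> real) (lam :: nat \<Rightarrow> real) (h :: nat \<Rightarrow> real).
            (\<forall>i<N. \<forall>j<N. C i j = C j i)
            \<longrightarrow> (\<forall>x. (\<Sum>i<N. \<Sum>j<N. x i * C i j * x j) \<ge> 0)
            \<longrightarrow> (\<forall>k<N. \<forall>l<N. rdot N (V k) (V l) = (if k = l then 1 else 0))
            \<longrightarrow> (\<forall>k<N. \<forall>i<N. matvec N C (V k) i = lam k * V k i)
            \<longrightarrow> (\<forall>k<N. lam k \<ge> 0)
            \<longrightarrow> (\<forall>w \<in> colspace N C. rdot N (\<lambda>j. cos (2 * \<theta> j)) w = 0)
            \<longrightarrow> (\<forall>S \<in> lindblad_span N lam V. \<exists>r :: real.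
                   codeP N \<theta> * S * codeP N \<theta> = complex_of_real r \<cdot>\<^sub>m codeP N \<theta>)
              \<and> codeP N \<theta> * hamH N h * codeP N \<theta>
                  = complex_of_real (1/2 * rdot N h (\<lambda>j. cos (2 * \<theta> j))) \<cdot>\<^sub>m codeZL N \<theta>)"
proof -
  have N0: "N > 0" and N2: "N \<ge> 2" using N3 by auto
  show ?thesis
    using K0[OF N0, of \<theta>] part4[OF N2, of \<theta>] part5[OF N3, of \<theta>] span_prop[OF N3] hamH_part[OF N2, of \<theta>]
    unfolding braket_bk by blast
qed


end
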